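(* Let $H$ be a $\theta$-stable Cartan subgroup of $G$ with a real root $\alpha$, let $J$ be the Cayley transform of $H$ with respect to $\alpha$, and let $c$ be as in the context. Assume $\Phi^+$ is a special set of positive roots for $H$, $\alpha\in\Phi^+$, and $\Phi^+_J=c^*\Phi^+$ is a special set of positive roots for $J$. Then $\alpha$ is a simple root of $\Phi^+_r=\Phi^+\cap\Phi_r$.
   Context: $G(\mathbb C)$ is a connected reductive complex algebraic group defined over $\mathbb R$ with complex conjugation $\sigma$, real points $G$, Cartan involution $\theta$. For a Cartan subgroup, a root $\alpha$ is real if $\sigma\alpha=\alpha$, imaginary if $\sigma\alpha=-\alpha$, complex otherwise; $\Phi_r$ is the set of real roots. A positive system $\Phi^+$ is special if $\sigma(\gamma)\in\Phi^+$ for every non-imaginary $\gamma\in\Phi^+$. The Cayley transform $J$ of $H$ with respect to the real root $\alpha$ is the $\theta$-stable Cartan subgroup with $\mathfrak h\cap\mathfrak j=\ker(\alpha|_{\mathfrak h})$ having a noncompact imaginary root $\beta$ corresponding to $\alpha$; $c$ is an element of the complex adjoint group with $\mathrm{Ad}(c)$ trivial on $\mathfrak h(\mathbb C)\cap\mathfrak j(\mathbb C)$, $\mathrm{Ad}(c)(\mathfrak j(\mathbb C))=\mathfrak h(\mathbb C)$, and $c^*$ the induced bijection from roots of $H$ to roots of $J$ with $c^*(\alpha)=\beta$. *)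

theory Defs
  imports "HOL-Analysis.Analysis"
begin

text \<open>Roots of a theta-stable Cartan subgroup are
  modelled as a finite reduced crystallographic root system in a real Euclidean
  space (the real span of the roots, with the form induced by an invariant form);
  complex conjugation acts on roots through a linear isometric involution.\<close>

definition refl :: "'a::euclidean_space \<Rightarrow> 'a \<Rightarrow> 'a" where
  "refl a b = b - (2 * (b \<bullet> a) / (a \<bullet> a)) *\<^sub>R a"

definition root_system :: "'a::euclidean_space set \<Rightarrow> bool" where
  "root_system R \<longleftrightarrow> finite R \<and> 0 \<notin> R \<and>
     (\<forall>a\<in>R. \<forall>b\<in>R. refl a b \<in> R \<and> 2 * (b \<bullet> a) / (a \<bullet> a) \<in> \<int>) \<and>
     (\<forall>a\<in>R. \<forall>t::real. t *\<^sub>R a \<in> R \<longrightarrow> t = 1 \<or> t = -1)"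

definition positive_system :: "'a::euclidean_space set \<Rightarrow> 'a set \<Rightarrow> bool" where
  "positive_system R P \<longleftrightarrow>
     (\<exists>f :: 'a \<Rightarrow> real. linear f \<and> (\<forall>a\<in>R. f a \<noteq> 0) \<and> P = {a\<in>R. f a > 0})"

definition root_involution :: "'a::euclidean_space set \<Rightarrow> ('a \<Rightarrow> 'a) \<Rightarrow> bool" where
  "root_involution R s \<longleftrightarrow> linear s \<and> (\<forall>x. s (s x) = x) \<and>
     (\<forall>x y. s x \<bullet> s y = x \<bullet> y) \<and> s ` R = R"

definition real_roots :: "'a::euclidean_space set \<Rightarrow> ('a \<Rightarrow> 'a) \<Rightarrow> 'a set" where
  "real_roots R s = {a\<in>R. s a = a}"

definition imaginary_root :: "('a::euclidean_space \<Rightarrow> 'a) \<Rightarrow> 'a \<Rightarrow> bool" where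
  "imaginary_root s a \<longleftrightarrow> s a = - a"

definition special :: "('a::euclidean_space \<Rightarrow> 'a) \<Rightarrow> 'a set \<Rightarrow> bool" where
  "special s P \<longleftrightarrow> (\<forall>g\<in>P. \<not> imaginary_root s g \<longrightarrow> s g \<in> P)"

definition simple_root :: "'a::euclidean_space set \<Rightarrow> 'a \<Rightarrow> bool" where
  "simple_root P a \<longleftrightarrow> a \<in> P \<and> \<not> (\<exists>b\<in>P. \<exists>g\<in>P. a = b + g)"

text \<open>Cayley transform data (dual picture): RJ is the root system of J with
  conjugation sJ, c is the bijection on roots (induced by Ad(c)), an isometric
  linear isomorphism with c alpha = beta, beta imaginary for J, and, since Ad(c)
  is trivial on the common part ker(alpha) of h and j and conjugation agrees there,
  sJ (c x) = c (s x) for x orthogonal to alpha.\<close>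
definition cayley_transform ::
  "'a::euclidean_space set \<Rightarrow> ('a \<Rightarrow> 'a) \<Rightarrow> 'a \<Rightarrow>
   'b::euclidean_space set \<Rightarrow> ('b \<Rightarrow> 'b) \<Rightarrow> 'b \<Rightarrow> ('a \<Rightarrow> 'b) \<Rightarrow> bool" where
  "cayley_transform R s alpha RJ sJ beta c \<longleftrightarrow>
     alpha \<in> R \<and> s alpha = alpha \<and>
     root_system RJ \<and> root_involution RJ sJ \<and>
     linear c \<and> bij c \<and> (\<forall>x y. c x \<bullet> c y = x \<bullet> y) \<and> c ` R = RJ \<and>
     c alpha = beta \<and> beta \<in> RJ \<and> imaginary_root sJ beta \<and>
     (\<forall>x. x \<bullet> alpha = 0 \<longrightarrow> sJ (c x) = c (s x))"

end

theory Submission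
  imports Defs
begin

lemma sJ_refl:
  assumes ct: "cayley_transform R s alpha RJ sJ beta c"
    and rs: "root_involution R s" and an: "alpha \<bullet> alpha \<noteq> 0"
    and sb: "s b = b"
  shows "sJ (c b) = c (refl alpha b)"
proof -
  define t where "t = (b \<bullet> alpha) / (alpha \<bullet> alpha)"
  define b0 where "b0 = b - t *\<^sub>R alpha"
  have lc: "linear c" and lsJ: "linear sJ" and ls: "linear s"
    using ct rs unfolding cayley_transform_def root_involution_def by auto
  have sa: "s alpha = alpha" and ca: "c alpha = beta" and ib: "sJ beta = - beta"
    and comm: "\<And>x. x \<bullet> alpha = 0 \<Longrightarrow> sJ (c x) = c (s x)"
    using ct unfolding cayley_transform_def imaginary_root_def by auto
  have o: "b0 \<bullet> alpha = 0" using an unfolding b0_def t_def by (simp add: inner_diff_left)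
  have sb0: "s b0 = b0" unfolding b0_def using ls sb sa by (simp add: linear_diff linear_scale)
  have "c b = c b0 + t *\<^sub>R beta" unfolding b0_def using lc ca by (simp add: linear_diff linear_scale)
  hence "sJ (c b) = sJ (c b0) + t *\<^sub>R sJ beta" using lsJ by (simp add: linear_add linear_scale)
  also have "\<dots> = c b0 - t *\<^sub>R beta" using comm[OF o] sb0 ib by simp
  also have "\<dots> = c (b0 - t *\<^sub>R alpha)" using lc ca by (simp add: linear_diff linear_scale)
  also have "b0 - t *\<^sub>R alpha = refl alpha b" unfolding b0_def t_def refl_def by (simp add: algebra_simps flip: scaleR_add_left)
  finally show ?thesis .
qed

theorem mainTheorem14:
  fixes R :: "'a::euclidean_space set" and s :: "'a \<Rightarrow> 'a" and alpha :: 'a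
    and RJ :: "'b::euclidean_space set" and sJ :: "'b \<Rightarrow> 'b" and beta :: 'b
    and c :: "'a \<Rightarrow> 'b" and P :: "'a set"
  assumes "root_system R" and "root_involution R s"
    and "alpha \<in> real_roots R s"
    and "cayley_transform R s alpha RJ sJ beta c"
    and "positive_system R P" and "special s P" and "alpha \<in> P"
    and "positive_system RJ (c ` P)" and "special sJ (c ` P)"
  shows "simple_root (P \<inter> real_roots R s) alpha"
proof -
  have aR: "alpha \<in> R" and sa: "s alpha = alpha" using assms(3) unfolding real_roots_def by auto
  have z: "0 \<notin> R" and red: "\<And>a t. a \<in> R \<Longrightarrow> t *\<^sub>R a \<in> R \<Longrightarrow> t = 1 \<or> t = -1"
    using assms(1) unfolding root_system_def by auto
  have an0: "alpha \<noteq> 0" using aR z by auto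
  hence an: "alpha \<bullet> alpha \<noteq> 0" by simp
  have lc: "linear c" and bc: "bij c" and lsJ: "linear sJ"
    using assms(4) unfolding cayley_transform_def root_involution_def by auto
  have ic: "inj c" using bc bij_is_inj by auto
  obtain f :: "'a \<Rightarrow> real" where lf: "linear f" and Pdef: "P = {a\<in>R. f a > 0}"
    using assms(5) unfolding positive_system_def by auto
  have PR: "P \<subseteq> R" using Pdef by auto
  have key: "refl alpha b \<in> P" if bP: "b \<in> P" and sb: "s b = b"
      and nm: "\<And>t. b \<noteq> t *\<^sub>R alpha" for b
  proof -
    have eq: "sJ (c b) = c (refl alpha b)" using sJ_refl[OF assms(4) assms(2) an sb] .
    have "\<not> imaginary_root sJ (c b)"
    proof
      assume "imaginary_root sJ (c b)"
      hence "c (refl alpha b) = c (- b)" using eq lc unfolding imaginary_root_def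
        by (simp add: linear_neg)
      hence "refl alpha b = - b" using ic by (simp add: inj_eq)
      hence h: "b - (2 * (b \<bullet> alpha) / (alpha \<bullet> alpha)) *\<^sub>R alpha = - b" unfolding refl_def .
      define k where "k = 2 * (b \<bullet> alpha) / (alpha \<bullet> alpha)"
      have "b + b = k *\<^sub>R alpha" using h unfolding k_def[symmetric]
        by (metis add_diff_cancel diff_minus_eq_add minus_diff_eq)
      hence "2 *\<^sub>R b = k *\<^sub>R alpha" by (simp add: scaleR_2)
      hence "(1/2) *\<^sub>R (2 *\<^sub>R b) = (1/2) *\<^sub>R (k *\<^sub>R alpha)" by simp
      hence "b = (k/2) *\<^sub>R alpha" by simp
      thus False using nm by blast
    qed
    hence "sJ (c b) \<in> c ` P" using assms(9) bP unfolding special_def by auto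
    hence "c (refl alpha b) \<in> c ` P" using eq by simp
    thus ?thesis using ic by (simp add: inj_image_mem_iff)
  qed
  show ?thesis unfolding simple_root_def
  proof (intro conjI notI)
    show "alpha \<in> P \<inter> real_roots R s" using assms(3,7) by auto
  next
    assume "\<exists>b\<in>P \<inter> real_roots R s. \<exists>g\<in>P \<inter> real_roots R s. alpha = b + g"
    then obtain b g where b: "b \<in> P" "s b = b" and g: "g \<in> P" "s g = g" and ab: "alpha = b + g"
      unfolding real_roots_def by auto
    have nm: "\<And>t. x \<noteq> t *\<^sub>R alpha" if x: "x \<in> P" and y: "y \<in> P" and xy: "alpha = x + y" for x y
    proof
      fix t assume xt: "x = t *\<^sub>R alpha"
      have "t = 1 \<or> t = -1" using red[OF aR] xt x PR by auto
      thus False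
      proof
        assume "t = 1" hence "y = 0" using xy xt by simp
        thus False using y PR z by auto
      next
        assume "t = -1" hence "y = 2 *\<^sub>R alpha" using xy xt by (simp add: algebra_simps scaleR_2)
        hence "(2::real) = 1 \<or> (2::real) = -1" using red[OF aR, of 2] y PR by auto
        thus False by simp
      qed
    qed
    have rb: "refl alpha b \<in> P" using key[OF b nm[OF b(1) g(1) ab]] .
    have rg: "refl alpha g \<in> P" using key[OF g nm[OF g(1) b(1)]] ab by (simp add: add.commute)
    have "refl alpha b + refl alpha g = (b + g) - ((2 * (b \<bullet> alpha) / (alpha \<bullet> alpha)) + (2 * (g \<bullet> alpha) / (alpha \<bullet> alpha))) *\<^sub>R alpha"
      unfolding refl_def by (simp add: scaleR_add_left)
    also have "(2 * (b \<bullet> alpha) / (alpha \<bullet> alpha)) + (2 * (g \<bullet> alpha) / (alpha \<bullet> alpha)) = 2 * ((b + g) \<bullet> alpha) / (alpha \<bullet> alpha)"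
      by (simp add: inner_add_left add_divide_distrib distrib_left)
    also have "\<dots> = 2" using an ab by simp
    finally have "refl alpha b + refl alpha g = - alpha" using ab by (simp add: scaleR_2)
    hence "f (refl alpha b) + f (refl alpha g) = - f alpha" using lf
      by (metis linear_add linear_neg)
    moreover have "f (refl alpha b) > 0" "f (refl alpha g) > 0" "f alpha > 0"
      using rb rg assms(7) Pdef by auto
    ultimately show False by linarith
  qed
qed

end
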